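(* Let $H$ be a real symmetric positive definite $d\times d$ matrix and $L$ a real $d\times d$ matrix with $L^TH+HL=0$. Let $s>1$ be odd and consider the $s$-stage explicit Runge–Kutta method applied to $\frac{d}{dt}u=Lu$, $u_{n+1}=G_s u_n$ with $G_s=\sum_{k=0}^s a_k(hL)^k$, $a_0=1$, where $a_k=\frac{1}{k!}$ for $k=1,\dots,s-1$ and $a_s=\frac{1}{s!}-\frac{1}{(s+1)!}$. Then the method has order $p=s-1$ and order of energy accuracy $r=s+2$.
   Context: The order $p$ of the method is the largest integer such that $a_k=1/k!$ for all $1\le k\le p$. For $0\le k\le s$, $b_k=\sum_{i=\max(0,2k-s)}^{\min(2k,s)}(-1)^{k+i}a_i a_{2k-i}$, so that the energy $\mathcal{E}=\tfrac12\langle u,Hu\rangle$ satisfies $\mathcal{E}_{n+1}=\mathcal{E}_n+\tfrac12\sum_{k=1}^s b_k h^{2k}\|L^k u_n\|_H^2$. The leading index $m$ is the smallest $k\ge1$ with $b_k\ne0$ and the order of energy accuracy is $r=2m-1$. *)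

theory Defs
  imports "HOL-Analysis.Analysis"
begin

text \<open>Coefficients a_0..a_s of the stability polynomial G_s = sum a_k (hL)^k of the
  s-stage method in the statement; a_k = 0 for k > s (G_s has degree s).\<close>
definition rk_coeffs :: "nat \<Rightarrow> nat \<Rightarrow> real" where
  "rk_coeffs s k =
     (if k = 0 then 1
      else if k < s then 1 / fact k
      else if k = s then 1 / fact s - 1 / fact (s + 1)
      else 0)"

definition method_order :: "(nat \<Rightarrow> real) \<Rightarrow> nat" where
  "method_order a = (GREATEST p. \<forall>k. 1 \<le> k \<and> k \<le> p \<longrightarrow> a k = 1 / fact k)"

definition energy_coeff :: "(nat \<Rightarrow> real) \<Rightarrow> nat \<Rightarrow> nat \<Rightarrow> real" where
  "energy_coeff a s k = (\<Sum>i = 2 * k - s .. min (2 * k) s. (-1) ^ (k + i) * a i * a (2 * k - i))"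

definition energy_leading_index :: "(nat \<Rightarrow> real) \<Rightarrow> nat \<Rightarrow> nat" where
  "energy_leading_index a s = (LEAST k. 1 \<le> k \<and> k \<le> s \<and> energy_coeff a s k \<noteq> 0)"

definition energy_order :: "(nat \<Rightarrow> real) \<Rightarrow> nat \<Rightarrow> nat" where
  "energy_order a s = 2 * energy_leading_index a s - 1"

end

theory Submission
  imports Defs
begin

lemma alt: assumes "n > 0"
  shows "(\<Sum>i=0..n. (-1)^i / (fact i * fact (n-i)) :: real) = 0"
proof -
  have "(\<Sum>i=0..n. (-1)^i / (fact i * fact (n-i)) :: real)
      = (\<Sum>i\<le>n. (-1)^i * of_nat (n choose i)) / fact n"
    by (simp add: atLeast0AtMost sum_divide_distrib binomial_fact)
  also have "\<dots> = 0" using choose_alternating_sum[OF assms] by simp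
  finally show ?thesis .
qed

lemma order_part: assumes "s > 1" shows "method_order (rk_coeffs s) = s - 1"
  unfolding method_order_def
proof (rule Greatest_equality)
  show "\<forall>k. 1 \<le> k \<and> k \<le> s - 1 \<longrightarrow> rk_coeffs s k = 1 / fact k"
    by (auto simp: rk_coeffs_def)
  fix y assume "\<forall>k. 1 \<le> k \<and> k \<le> y \<longrightarrow> rk_coeffs s k = 1 / fact k"
  then show "y \<le> s - 1"
  proof (rule contrapos_pp)
    assume "\<not> y \<le> s - 1"
    then have "1 \<le> s \<and> s \<le> y" using assms by auto
    moreover have "rk_coeffs s s \<noteq> 1 / fact s"
      using assms by (simp add: rk_coeffs_def)
    ultimately show "\<not> (\<forall>k. 1 \<le> k \<and> k \<le> y \<longrightarrow> rk_coeffs s k = 1 / fact k)" by blast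
  qed
qed

lemma caseA: assumes "1 \<le> k" "2*k < s"
  shows "energy_coeff (rk_coeffs s) s k = 0"
proof -
  have "energy_coeff (rk_coeffs s) s k = (\<Sum>i=0..2*k. (-1)^k * ((-1)^i / (fact i * fact (2*k-i))))"
    unfolding energy_coeff_def using assms
    by (intro sum.cong) (auto simp: rk_coeffs_def power_add eval_nat_numeral)
  also have "\<dots> = (-1)^k * (\<Sum>i=0..2*k. (-1)^i / (fact i * fact (2*k-i)))"
    by (rule sum_distrib_left[symmetric])
  also have "\<dots> = 0" using alt[of "2*k"] assms by simp
  finally show ?thesis .
qed

lemma caseB: assumes "s = 2*t+1" "t \<ge> 1"
  shows "energy_coeff (rk_coeffs s) s (t+1) = 0"
proof -
  define F where "F i = (-1)^(t+1+i) * rk_coeffs s i * rk_coeffs s (2*(t+1)-i)" for i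
  define E where "E i = (-1)^(t+1) * ((-1)^i / (fact i * fact (2*t+2-i)) :: real)" for i
  have e0: "sum E {0..2*t+2} = 0"
  proof -
    have A: "(\<Sum>i=0..2*t+2. (-1)^i / (fact i * fact (2*t+2-i)) :: real) = 0"
      by (rule alt) simp
    have "sum E {0..2*t+2} = (-1)^(t+1) * (\<Sum>i=0..2*t+2. (-1)^i / (fact i * fact (2*t+2-i)))"
      unfolding E_def by (rule sum_distrib_left[symmetric])
    also have "\<dots> = 0" by (simp only: A mult_zero_right)
    finally show ?thesis .
  qed
  have "energy_coeff (rk_coeffs s) s (t+1) = sum F {1..2*t+1}"
    unfolding energy_coeff_def F_def using assms by simp
  also have "\<dots> = F 1 + sum F {2..2*t} + F (2*t+1)"
    using assms by (simp add: sum.atLeast_Suc_atMost numeral_2_eq_2)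
  also have "sum F {2..2*t} = sum E {2..2*t}"
    unfolding F_def E_def using assms
    by (intro sum.cong) (auto simp: rk_coeffs_def power_add eval_nat_numeral)
  also have "sum E {2..2*t} = - (E 0 + E 1 + E (2*t+1) + E (2*t+2))"
  proof -
    have "sum E {0..2*t+2} = E 0 + E 1 + sum E {2..2*t} + E (2*t+1) + E (2*t+2)"
      using assms by (simp add: sum.atLeast_Suc_atMost numeral_2_eq_2)
    then show ?thesis using e0 by simp
  qed
  finally have X: "energy_coeff (rk_coeffs s) s (t+1) = F 1 + - (E 0 + E 1 + E (2*t+1) + E (2*t+2)) + F (2*t+1)" .
  define c where "c = ((-1)^t :: real)"
  define N where "N = (fact (2*t+1) :: real)"
  define M where "M = (fact (2*t+2) :: real)"
  have f1: "F 1 = c * (1/N - 1/M)"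
    using assms unfolding F_def c_def N_def M_def by (simp add: rk_coeffs_def power_add)
  have f2: "F (2*t+1) = c * (1/N - 1/M)"
    using assms unfolding F_def c_def N_def M_def
    by (simp add: rk_coeffs_def power_add power_mult)
  have e0: "E 0 = - c / M" unfolding E_def c_def M_def by simp
  have e1: "E 1 = c / N" unfolding E_def c_def N_def
    by (simp add: numeral_2_eq_2)
  have e2: "E (2*t+1) = c / N" unfolding E_def c_def N_def
    by (simp add: power_add power_mult)
  have e3: "E (2*t+2) = - c / M" unfolding E_def c_def M_def
    by (simp add: power_add power_mult)
  show ?thesis unfolding X f1 f2 e0 e1 e2 e3 by (simp add: field_simps)
qed

lemma caseC: assumes "s = 2*t+1" "t \<ge> 1"
  shows "energy_coeff (rk_coeffs s) s (t+2) \<noteq> 0"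
proof -
  define F where "F i = (-1)^(t+2+i) * rk_coeffs s i * rk_coeffs s (2*(t+2)-i)" for i
  define E where "E i = (-1)^(t+2) * ((-1)^i / (fact i * fact (2*t+4-i)) :: real)" for i
  have X0: "energy_coeff (rk_coeffs s) s (t+2) = sum F {3..2*t+1}"
    unfolding energy_coeff_def F_def using assms by simp
  show ?thesis
  proof (cases "t = 1")
    case True
    then have "s = 3" using assms by simp
    then show ?thesis unfolding X0 using True
      by (simp add: F_def rk_coeffs_def fact_numeral)
  next
    case False
    then have t2: "t \<ge> 2" using assms by simp
    have e0: "sum E {0..2*t+4} = 0"
    proof -
      have A: "(\<Sum>i=0..2*t+4. (-1)^i / (fact i * fact (2*t+4-i)) :: real) = 0"
        by (rule alt) simp
      have "sum E {0..2*t+4} = (-1)^(t+2) * (\<Sum>i=0..2*t+4. (-1)^i / (fact i * fact (2*t+4-i)))"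
        unfolding E_def by (rule sum_distrib_left[symmetric])
      also have "\<dots> = 0" by (simp only: A mult_zero_right)
      finally show ?thesis .
    qed
    have "sum F {3..2*t+1} = F 3 + sum F {4..2*t} + F (2*t+1)"
      using t2 by (simp add: sum.atLeast_Suc_atMost eval_nat_numeral)
    also have "sum F {4..2*t} = sum E {4..2*t}"
      unfolding F_def E_def using assms
      by (intro sum.cong) (auto simp: rk_coeffs_def power_add eval_nat_numeral)
    also have "sum E {4..2*t} = - (E 0 + E 1 + E 2 + E 3 + E (2*t+1) + E (2*t+2) + E (2*t+3) + E (2*t+4))"
    proof -
      have "sum E {0..2*t+4} = E 0 + E 1 + E 2 + E 3 + sum E {4..2*t} + E (2*t+1) + E (2*t+2) + E (2*t+3) + E (2*t+4)"
        using t2 by (simp add: sum.atLeast_Suc_atMost eval_nat_numeral)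
      then show ?thesis using e0 by simp
    qed
    finally have X: "sum F {3..2*t+1} = F 3 + - (E 0 + E 1 + E 2 + E 3 + E (2*t+1) + E (2*t+2) + E (2*t+3) + E (2*t+4)) + F (2*t+1)" .
    define c where "c = ((-1)^t :: real)"
    define P where "P = (fact (2*t+1) :: real)"
    define Q where "Q = (fact (2*t+2) :: real)"
    define R3 where "R3 = (fact (2*t+3) :: real)"
    define R4 where "R4 = (fact (2*t+4) :: real)"
    have f1: "F 3 = - c / 6 * (1/P - 1/Q)"
      using assms t2 unfolding F_def c_def P_def Q_def by (simp add: rk_coeffs_def power_add fact_numeral)
    have f2: "F (2*t+1) = - c / 6 * (1/P - 1/Q)"
      using assms t2 unfolding F_def c_def P_def Q_def
      by (simp add: rk_coeffs_def power_add power_mult fact_numeral eval_nat_numeral)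
    have g0: "E 0 = c / R4" unfolding E_def c_def R4_def by (simp add: power_add)
    have g1: "E 1 = - c / R3" unfolding E_def c_def R3_def by (simp add: power_add eval_nat_numeral)
    have g2: "E 2 = c / (2 * Q)" unfolding E_def c_def Q_def by (simp add: power_add eval_nat_numeral)
    have g3: "E 3 = - c / (6 * P)" unfolding E_def c_def P_def by (simp add: power_add eval_nat_numeral)
    have g4: "E (2*t+1) = - c / (6 * P)" unfolding E_def c_def P_def
      by (simp add: power_add power_mult eval_nat_numeral)
    have g5: "E (2*t+2) = c / (2 * Q)" unfolding E_def c_def Q_def
      by (simp add: power_add power_mult eval_nat_numeral)
    have g6: "E (2*t+3) = - c / R3" unfolding E_def c_def R3_def
      by (simp add: power_add power_mult eval_nat_numeral)
    have g7: "E (2*t+4) = c / R4" unfolding E_def c_def R4_def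
      by (simp add: power_add power_mult eval_nat_numeral)
    have hQ: "P = Q / (2*t+2)" unfolding P_def Q_def by (simp add: fact_Suc)
    have h3: "R3 = (2*t+3) * Q" unfolding R3_def Q_def by (simp add: fact_Suc eval_nat_numeral)
    have h4: "R4 = (2*t+4) * ((2*t+3) * Q)" unfolding R4_def Q_def by (simp add: fact_Suc eval_nat_numeral)
    have Qp: "Q > 0" unfolding Q_def by simp
    have c0: "c \<noteq> 0" unfolding c_def by simp
    have V: "sum F {3..2*t+1} = c / Q * (1/(t+2) - 2/3)"
    proof -
      define u where "u = c / Q"
      define T where "T = real t"
      have T0: "T \<ge> 0" unfolding T_def by simp
      have r1: "c / P = u * (2*T+2)" unfolding u_def T_def hQ by simp
      have r1': "c * (1/P - 1/Q) = u * (2*T+1)" unfolding u_def T_def hQ using Qp by (simp add: field_simps)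
      have r2: "c / R3 = u / (2*T+3)" unfolding u_def T_def h3 by simp
      have r3: "c / R4 = u / ((2*T+4)*(2*T+3))" unfolding u_def T_def h4 by simp
      have r4: "c / (2*Q) = u / 2" unfolding u_def by simp
      have r5: "c / (6*P) = u * (2*T+2) / 6" unfolding u_def T_def hQ using Qp by (simp add: field_simps)
      have "sum F {3..2*t+1} = - (c * (1/P - 1/Q)) / 3 - (2 * (c/R4) - 2 * (c/R3) + 2 * (c/(2*Q)) - 2 * (c/(6*P)))"
        unfolding X f1 f2 g0 g1 g2 g3 g4 g5 g6 g7 by (simp add: field_simps)
      also have "\<dots> = - (u * (2*T+1)) / 3 - (2 * (u / ((2*T+4)*(2*T+3))) - 2 * (u / (2*T+3)) + 2 * (u/2) - 2 * (u * (2*T+2) / 6))"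
        unfolding r1' r2 r3 r4 r5 ..
      also have "\<dots> = u * (1/(T+2) - 2/3)"
      proof -
        have d: "12 + (T*14 + T*(T*4)) > 0" using T0 by (simp add: add_pos_nonneg)
        have d2: "2*T+3 > 0" "2*T+4 > 0" "T+2>0" using T0 by linarith+
        have k: "2 * (u / ((2*T+4)*(2*T+3))) - 2 * (u / (2*T+3)) = - (u / (T+2))"
        proof -
          have g: "2 * (u / (x*y)) - 2 * (u / y) = - (2*u/x)" if "y = x - 1" "x > 1" for x y :: real
          proof -
            have "y \<noteq> 0" "x \<noteq> 0" using that by auto
            then have "2 * (u / (x*y)) - 2 * (u / y) = 2*u*(1-x)/(x*y)" by (simp add: field_simps)
            also have "\<dots> = 2*u*(-y)/(x*y)" using that by simp
            also have "\<dots> = - (2*u/x)" using \<open>y \<noteq> 0\<close> \<open>x \<noteq> 0\<close> by (simp add: field_simps)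
            finally show ?thesis .
          qed
          have "2 * (u / ((2*T+4)*(2*T+3))) - 2 * (u / (2*T+3)) = - (2*u/(2*T+4))"
            by (rule g) (use d2 in auto)
          also have "\<dots> = - (u / (T+2))" using d2 by (simp add: field_simps)
          finally show ?thesis .
        qed
        have "- (u * (2*T+1)) / 3 - (2 * (u / ((2*T+4)*(2*T+3))) - 2 * (u / (2*T+3)) + 2 * (u/2) - 2 * (u * (2*T+2) / 6))
            = - (u * (2*T+1)) / 3 - (- (u / (T+2)) + u - u * (2*T+2) / 3)"
          using k by simp
        also have "\<dots> = u * (1/(T+2) - 2/3)"
          by (simp add: algebra_simps add_divide_distrib diff_divide_distrib)
        finally show ?thesis .
      qed
      finally show ?thesis unfolding u_def T_def by simp
    qed
    have "1/(real t+2) < 2/3" "1/(2 + real t) < 2/3" using t2 by (simp_all add: field_simps)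
    then show ?thesis unfolding X0 V using c0 Qp by simp
  qed
qed

theorem proposition3:
  fixes H L :: "real ^ 'd ^ 'd" and s :: nat
  assumes "transpose H = H"
    and "\<forall>x. x \<noteq> 0 \<longrightarrow> x \<bullet> (H *v x) > 0"
    and "transpose L ** H + H ** L = 0"
    and "s > 1" and "odd s"
  shows "method_order (rk_coeffs s) = s - 1 \<and> energy_order (rk_coeffs s) s = s + 2"
proof
  show "method_order (rk_coeffs s) = s - 1" using order_part assms(4) .
  obtain t where st: "s = 2*t+1" using assms(5) oddE by blast
  have t1: "t \<ge> 1" using st assms(4) by simp
  have "energy_leading_index (rk_coeffs s) s = t + 2"
    unfolding energy_leading_index_def
  proof (rule Least_equality)
    show "1 \<le> t + 2 \<and> t + 2 \<le> s \<and> energy_coeff (rk_coeffs s) s (t + 2) \<noteq> 0"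
      using caseC[OF st t1] st t1 by simp
    fix y assume y: "1 \<le> y \<and> y \<le> s \<and> energy_coeff (rk_coeffs s) s y \<noteq> 0"
    show "t + 2 \<le> y"
    proof (rule ccontr)
      assume "\<not> t + 2 \<le> y"
      then have "y \<le> t \<or> y = t + 1" by auto
      then show False
      proof
        assume "y \<le> t" then show False using caseA[of y s] y st by simp
      next
        assume "y = t + 1" then show False using caseB[OF st t1] y by simp
      qed
    qed
  qed
  then show "energy_order (rk_coeffs s) s = s + 2"
    unfolding energy_order_def using st by simp
qed

end
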